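(* Let $q$ be a prime power and let $a,b\in\mathbb{F}_q^{*}$ be such that the multiplicative order of $a$ divides the multiplicative order of $b$. Let $n$ be a positive integer such that $\gcd(n,q)=\gcd(n,q-1)=1$. Then the families of $a$-constacyclic and $b$-constacyclic codes of length $n$ over $\mathbb{F}_q$ are monomially equivalent.
   Context: For $c\in\mathbb{F}_q^*$, a linear code $C\subseteq\mathbb{F}_q^n$ is called $c$-constacyclic if for every codeword $(c_0,c_1,\ldots,c_{n-1})\in C$ we also have $(c\, c_{n-1},c_0,\ldots,c_{n-2})\in C$; equivalently, such codes correspond to ideals of $\mathbb{F}_q[x]/\langle x^n-c\rangle$. An isometry of linear codes is an $\mathbb{F}_q$-linear isomorphism preserving Hamming distance (equivalently, a map given by a monomial matrix). For $a,b\in\mathbb{F}_q^*$, the families of $a$-constacyclic and $b$-constacyclic codes of length $n$ over $\mathbb{F}_q$ are called monomially equivalent if there is a one-to-one correspondence between the set of $a$-constacyclic codes and the set of $b$-constacyclic codes of length $n$ given by an isometry of linear codes. *)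

theory Defs
  imports Main
begin

text \<open>Words of length n over a field: functions nat => 'a that vanish outside {0..<n};
  the i-th coordinate of the word is w i, for i < n.\<close>

definition space :: "nat \<Rightarrow> (nat \<Rightarrow> 'a::field) set" where
  "space n = {w. \<forall>i. n \<le> i \<longrightarrow> w i = 0}"

definition hamming_dist :: "nat \<Rightarrow> (nat \<Rightarrow> 'a::field) \<Rightarrow> (nat \<Rightarrow> 'a) \<Rightarrow> nat" where
  "hamming_dist n u v = card {i. i < n \<and> u i \<noteq> v i}"

definition linear_code :: "nat \<Rightarrow> (nat \<Rightarrow> 'a::field) set \<Rightarrow> bool" where
  "linear_code n C \<longleftrightarrow> C \<subseteq> space n \<and> (\<lambda>_. 0) \<in> C \<and>
     (\<forall>u\<in>C. \<forall>v\<in>C. (\<lambda>i. u i + v i) \<in> C) \<and>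
     (\<forall>c. \<forall>u\<in>C. (\<lambda>i. c * u i) \<in> C)"

definition const_shift :: "nat \<Rightarrow> 'a::field \<Rightarrow> (nat \<Rightarrow> 'a) \<Rightarrow> (nat \<Rightarrow> 'a)" where
  "const_shift n c w = (\<lambda>i. if i = 0 then c * w (n - 1) else if i < n then w (i - 1) else 0)"

definition constacyclic :: "nat \<Rightarrow> 'a::field \<Rightarrow> (nat \<Rightarrow> 'a) set \<Rightarrow> bool" where
  "constacyclic n c C \<longleftrightarrow> linear_code n C \<and> (\<forall>w\<in>C. const_shift n c w \<in> C)"

definition isometry :: "nat \<Rightarrow> ((nat \<Rightarrow> 'a::field) \<Rightarrow> (nat \<Rightarrow> 'a)) \<Rightarrow> bool" where
  "isometry n f \<longleftrightarrow> bij_betw f (space n) (space n) \<and>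
     (\<forall>u\<in>space n. \<forall>v\<in>space n. f (\<lambda>i. u i + v i) = (\<lambda>i. f u i + f v i)) \<and>
     (\<forall>c. \<forall>u\<in>space n. f (\<lambda>i. c * u i) = (\<lambda>i. c * f u i)) \<and>
     (\<forall>u\<in>space n. \<forall>v\<in>space n. hamming_dist n (f u) (f v) = hamming_dist n u v)"

definition monomially_equivalent :: "nat \<Rightarrow> 'a::field \<Rightarrow> 'a \<Rightarrow> bool" where
  "monomially_equivalent n a b \<longleftrightarrow>
     (\<exists>f. isometry n f \<and>
        bij_betw (\<lambda>C. f ` C) {C. constacyclic n a C} {C. constacyclic n b C})"

definition mult_order :: "'a::field \<Rightarrow> nat" where
  "mult_order a = (LEAST k. 0 < k \<and> a ^ k = 1)"

end

theory Submission
  imports Defs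
begin

definition diagm :: "'a::field \<Rightarrow> (nat \<Rightarrow> 'a) \<Rightarrow> (nat \<Rightarrow> 'a)" where
  "diagm m w = (\<lambda>i. m ^ i * w i)"

lemma fermat_ff:
  fixes z :: "'a::{finite,field}"
  assumes "z \<noteq> 0"
  shows "z ^ (card (UNIV :: 'a set) - 1) = 1"
proof -
  let ?S = "UNIV - {0::'a}"
  have inj: "inj_on (\<lambda>x. z * x) ?S" using assms by (auto simp: inj_on_def)
  have img: "(\<lambda>x. z * x) ` ?S = ?S"
  proof
    show "(\<lambda>x. z * x) ` ?S \<subseteq> ?S" using assms by auto
    show "?S \<subseteq> (\<lambda>x. z * x) ` ?S"
    proof
      fix y assume "y \<in> ?S"
      then have "y = z * (inverse z * y)" "inverse z * y \<in> ?S" using assms by auto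
      then show "y \<in> (\<lambda>x. z * x) ` ?S" by blast
    qed
  qed
  have "prod (\<lambda>x. x) ?S = prod (\<lambda>x. x) ((\<lambda>x. z * x) ` ?S)" using img by simp
  also have "\<dots> = prod (\<lambda>x. z * x) ?S" using prod.reindex[OF inj] by simp
  also have "\<dots> = z ^ card ?S * prod (\<lambda>x. x) ?S" by (simp add: prod.distrib)
  finally have e: "prod (\<lambda>x. x) ?S = z ^ card ?S * prod (\<lambda>x. x) ?S" .
  have nz: "prod (\<lambda>x. x) ?S \<noteq> 0" by (simp add: prod_zero_iff)
  have "card ?S = card (UNIV :: 'a set) - 1" by (simp add: card_Diff_singleton)
  with e nz show ?thesis by simp
qed

lemma nth_root_ex:
  fixes t :: "'a::{finite,field}"
  assumes "t \<noteq> 0" "0 < n" "gcd n ((card (UNIV :: 'a set)) - 1) = 1"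
  shows "\<exists>m. m \<noteq> 0 \<and> m ^ n = t"
proof -
  obtain x y where xy: "n * x = (card (UNIV :: 'a set) - 1) * y + 1"
    using bezout_nat[of n "card (UNIV :: 'a set) - 1"] assms by auto
  have "(t ^ x) ^ n = t ^ (n * x)" by (metis power_mult mult.commute)
  also have "\<dots> = (t ^ (card (UNIV :: 'a set) - 1)) ^ y * t"
    by (simp add: xy power_add power_mult)
  also have "\<dots> = t" using fermat_ff[OF assms(1)] by simp
  finally have "t ^ x \<noteq> 0 \<and> (t ^ x) ^ n = t" using assms(1) by simp
  then show ?thesis by blast
qed

lemma diagm_lin:
  assumes "m \<noteq> 0" "linear_code n C"
  shows "linear_code n (diagm m ` C)"
  unfolding linear_code_def
proof (intro conjI ballI allI)
  show "diagm m ` C \<subseteq> space n" using assms(2)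
    by (auto simp: linear_code_def space_def diagm_def)
  have "diagm m (\<lambda>_. 0) = (\<lambda>_. 0)" by (simp add: diagm_def)
  then show "(\<lambda>_. 0) \<in> diagm m ` C" using assms(2)
    by (metis image_eqI linear_code_def)
next
  fix u v assume "u \<in> diagm m ` C" "v \<in> diagm m ` C"
  then obtain u' v' where "u' \<in> C" "v' \<in> C" "u = diagm m u'" "v = diagm m v'" by blast
  moreover have "(\<lambda>i. u' i + v' i) \<in> C" using assms(2) calculation by (auto simp: linear_code_def)
  moreover have "(\<lambda>i. u i + v i) = diagm m (\<lambda>i. u' i + v' i)"
    using calculation by (simp add: diagm_def algebra_simps)
  ultimately show "(\<lambda>i. u i + v i) \<in> diagm m ` C" by blast
next
  fix c u assume "u \<in> diagm m ` C"
  then obtain u' where "u' \<in> C" "u = diagm m u'" by blast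
  moreover have "(\<lambda>i. c * u' i) \<in> C" using assms(2) calculation by (auto simp: linear_code_def)
  moreover have "(\<lambda>i. c * u i) = diagm m (\<lambda>i. c * u' i)"
    using calculation by (simp add: diagm_def algebra_simps)
  ultimately show "(\<lambda>i. c * u i) \<in> diagm m ` C" by blast
qed

lemma diagm_shift:
  fixes m :: "'a::field"
  assumes "0 < n" "c' * m ^ n = c" "m \<noteq> 0"
  shows "const_shift n c' (diagm m w) = (\<lambda>i. inverse m * diagm m (const_shift n c w) i)"
proof
  fix i
  have mn: "m ^ n = m * m ^ (n - 1)" using assms(1) by (cases n) auto
  show "const_shift n c' (diagm m w) i = inverse m * diagm m (const_shift n c w) i"
  proof (cases "i = 0")
    case True
    have calc: "inverse m * (c * w (n - 1)) = inverse m * (c' * (m * m ^ (n - 1)) * w (n - 1))"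
      by (simp only: assms(2)[symmetric] mn)
    also have "\<dots> = c' * (m ^ (n - 1) * w (n - 1))" using assms(3) by (simp add: mult.assoc mult.left_commute)
    finally have calc2: "inverse m * (c * w (n - 1)) = c' * (m ^ (n - 1) * w (n - 1))" .
    have l0: "const_shift n c' (diagm m w) 0 = c' * (m ^ (n - 1) * w (n - 1))"
      using assms(1) by (simp add: const_shift_def diagm_def)
    have r0: "diagm m (const_shift n c w) 0 = c * w (n - 1)"
      using assms(1) by (simp add: const_shift_def diagm_def)
    show ?thesis unfolding True l0 r0 calc2 ..
  next
    case False
    then obtain j where j: "i = Suc j" by (cases i) auto
    have l: "const_shift n c' (diagm m w) i = (if Suc j < n then m ^ j * w j else 0)"
      by (simp add: j const_shift_def diagm_def)
    have r: "inverse m * diagm m (const_shift n c w) i = inverse m * (if Suc j < n then m * m ^ j * w j else 0)"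
      by (simp add: j const_shift_def diagm_def)
    show ?thesis unfolding l r using assms(3) by (simp add: mult.assoc)
  qed
qed

lemma diagm_const:
  assumes "0 < n" "c' * m ^ n = c" "m \<noteq> 0" "constacyclic n c C"
  shows "constacyclic n c' (diagm m ` C)"
  unfolding constacyclic_def
proof (intro conjI ballI)
  have lc: "linear_code n C" using assms(4) by (simp add: constacyclic_def)
  show L: "linear_code n (diagm m ` C)" using diagm_lin[OF assms(3) lc] .
  fix w assume "w \<in> diagm m ` C"
  then obtain w' where w': "w' \<in> C" "w = diagm m w'" by blast
  have "const_shift n c w' \<in> C" using assms(4) w' by (simp add: constacyclic_def)
  then have "diagm m (const_shift n c w') \<in> diagm m ` C" by blast
  then have "(\<lambda>i. inverse m * diagm m (const_shift n c w') i) \<in> diagm m ` C"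
    using L unfolding linear_code_def by blast
  then show "const_shift n c' w \<in> diagm m ` C"
    using diagm_shift[OF assms(1-3)] w' by simp
qed

lemma diagm_inv:
  assumes "m \<noteq> 0"
  shows "diagm m (diagm (inverse m) w) = w"
  using assms by (simp add: diagm_def fun_eq_iff power_inverse)

lemma diagm_inj:
  assumes "m \<noteq> 0"
  shows "inj (diagm m)"
proof (rule inj_on_inverseI)
  fix w :: "nat \<Rightarrow> 'a"
  have "inverse m \<noteq> 0" using assms by simp
  from diagm_inv[OF this, of w] assms show "diagm (inverse m) (diagm m w) = w" by simp
qed

lemma diagm_iso:
  fixes m :: "'a::field"
  assumes "m \<noteq> 0"
  shows "isometry n (diagm m)"
  unfolding isometry_def
proof (intro conjI ballI allI)
  have sp: "diagm m' ` space n \<subseteq> space n" for m' :: 'a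
    by (auto simp: space_def diagm_def)
  show "bij_betw (diagm m) (space n) (space n)"
    unfolding bij_betw_def
  proof
    show "inj_on (diagm m) (space n)" using diagm_inj[OF assms] by (metis inj_on_subset subset_UNIV)
    show "diagm m ` space n = space n"
    proof
      show "diagm m ` space n \<subseteq> space n" by (rule sp)
      show "space n \<subseteq> diagm m ` space n"
      proof
        fix w :: "nat \<Rightarrow> 'a" assume "w \<in> space n"
        then have "diagm (inverse m) w \<in> space n" using sp by blast
        then show "w \<in> diagm m ` space n" using diagm_inv[OF assms] by (metis image_eqI)
      qed
    qed
  qed
  fix u v :: "nat \<Rightarrow> 'a" assume "u \<in> space n" "v \<in> space n"
  have "{i. i < n \<and> diagm m u i \<noteq> diagm m v i} = {i. i < n \<and> u i \<noteq> v i}"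
    using assms by (auto simp: diagm_def)
  then show "hamming_dist n (diagm m u) (diagm m v) = hamming_dist n u v"
    by (simp add: hamming_dist_def)
next
  fix u v :: "nat \<Rightarrow> 'a"
  show "diagm m (\<lambda>i. u i + v i) = (\<lambda>i. diagm m u i + diagm m v i)"
    by (simp add: diagm_def distrib_left)
next
  fix c and u :: "nat \<Rightarrow> 'a"
  show "diagm m (\<lambda>i. c * u i) = (\<lambda>i. c * diagm m u i)"
    by (simp add: diagm_def mult.left_commute)
qed

theorem corollary3p2:
  fixes a b :: "'a::{finite,field}" and n :: nat
  assumes "a \<noteq> 0" and "b \<noteq> 0"
    and "mult_order a dvd mult_order b"
    and "0 < n"
    and "gcd n (card (UNIV :: 'a set)) = 1" and "gcd n ((card (UNIV :: 'a set)) - 1) = 1"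
  shows "monomially_equivalent n a b"
proof -
  obtain m :: 'a where m: "m \<noteq> 0" "m ^ n = a / b"
    using nth_root_ex[of "a / b" n] assms by auto
  have bm: "b * m ^ n = a" using m assms(2) by simp
  have am: "a * (inverse m) ^ n = b" using m assms(1,2) by (simp add: power_inverse)
  have im: "inverse m \<noteq> 0" using m by simp
  show ?thesis unfolding monomially_equivalent_def
  proof (intro exI conjI)
    show "isometry n (diagm m)" by (rule diagm_iso[OF m(1)])
    show "bij_betw ((`) (diagm m)) {C. constacyclic n a C} {C. constacyclic n b C}"
      unfolding bij_betw_def
    proof
      show "inj_on ((`) (diagm m)) {C. constacyclic n a C}"
        using diagm_inj[OF m(1)] by (meson inj_image_eq_iff inj_onI)
      show "(`) (diagm m) ` {C. constacyclic n a C} = {C. constacyclic n b C}"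
      proof
        show "(`) (diagm m) ` {C. constacyclic n a C} \<subseteq> {C. constacyclic n b C}"
          using diagm_const[OF assms(4) bm m(1)] by auto
        show "{C. constacyclic n b C} \<subseteq> (`) (diagm m) ` {C. constacyclic n a C}"
        proof
          fix D assume "D \<in> {C. constacyclic n b C}"
          then have "constacyclic n a (diagm (inverse m) ` D)"
            using diagm_const[OF assms(4) am im] by auto
          moreover have "diagm m ` (diagm (inverse m) ` D) = D"
            using diagm_inv[OF m(1)] by (simp add: image_image)
          ultimately show "D \<in> (`) (diagm m) ` {C. constacyclic n a C}" by (metis image_eqI mem_Collect_eq)
        qed
      qed
    qed
  qed
qed

end
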